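(* For $\tau\in\mathbb{R}$ and integer $n\ge0$ let $$\mu_{2n}(\tau;0)=\int_{-\infty}^{\infty}x^{2n}\exp(-x^6+\tau x^4)\,dx.$$ Then \begin{align*} \mu_{2n}(\tau;0)&=\tfrac13\Gamma\!\left(\tfrac13n+\tfrac16\right){}_2F_2\!\left(\tfrac16n+\tfrac1{12},\tfrac16n+\tfrac7{12};\tfrac13,\tfrac23;\tfrac{4\tau^3}{27}\right)+\tfrac13\tau\Gamma\!\left(\tfrac13n+\tfrac56\right){}_2F_2\!\left(\tfrac16n+\tfrac5{12},\tfrac16n+\tfrac{11}{12};\tfrac23,\tfrac43;\tfrac{4\tau^3}{27}\right)\\ &\quad+\tfrac16\tau^2\Gamma\!\left(\tfrac13n+\tfrac32\right){}_2F_2\!\left(\tfrac16n+\tfrac34,\tfrac16n+\tfrac54;\tfrac43,\tfrac53;\tfrac{4\tau^3}{27}\right). \end{align*}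
   Context: ${}_2F_2(a_1,a_2;b_1,b_2;z)$ denotes the generalised hypergeometric function with upper parameters $a_1,a_2$ and lower parameters $b_1,b_2$. *)

theory Defs
  imports "HOL-Analysis.Analysis"
begin

definition hyp2F2 :: "real \<Rightarrow> real \<Rightarrow> real \<Rightarrow> real \<Rightarrow> real \<Rightarrow> real" where
  "hyp2F2 a1 a2 b1 b2 z =
     (\<Sum>k. pochhammer a1 k * pochhammer a2 k / (pochhammer b1 k * pochhammer b2 k)
            * z ^ k / fact k)"

definition mu0 :: "nat \<Rightarrow> real \<Rightarrow> real" where
  "mu0 n \<tau> = (LBINT x. x ^ (2*n) * exp (- (x ^ 6) + \<tau> * x ^ 4))"

end

theory Submission
  imports Defs "HOL-Real_Asymp.Real_Asymp"
begin

lemma gamma_lborel: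
  fixes s :: real assumes s: "s > 0"
  shows "set_integrable lborel {0<..} (\<lambda>t. t powr (s-1) / exp t)"
    "(LBINT t:{0<..}. t powr (s-1) / exp t) = Gamma s"
proof -
  have eq: "(\<lambda>t. ennreal (indicator {0..} t * t powr (s - 1) / exp t)) =
            (\<lambda>t. ennreal (indicator {0<..} t *\<^sub>R (t powr (s - 1) / exp t)))"
    by (auto simp: indicator_def fun_eq_iff)
  have "(\<integral>\<^sup>+t. ennreal (indicator {0<..} t *\<^sub>R (t powr (s - 1) / exp t)) \<partial>lborel) = ennreal (Gamma s)"
    using Gamma_conv_nn_integral_real[OF s] eq by simp
  moreover have "(\<lambda>t. indicator {0<..} t *\<^sub>R (t powr (s - 1) / exp t)) \<in> borel_measurable lborel"
    by measurable
  moreover have "0 \<le> Gamma s" using s by (simp add: Gamma_real_pos less_imp_le)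
  ultimately have "integrable lborel (\<lambda>t. indicator {0<..} t *\<^sub>R (t powr (s - 1) / exp t)) \<and>
     integral\<^sup>L lborel (\<lambda>t. indicator {0<..} t *\<^sub>R (t powr (s - 1) / exp t)) = Gamma s"
    by (subst nn_integral_eq_integrable[symmetric]) (auto simp: indicator_def)
  then show "set_integrable lborel {0<..} (\<lambda>t. t powr (s-1) / exp t)"
    "(LBINT t:{0<..}. t powr (s-1) / exp t) = Gamma s"
    by (auto simp: set_integrable_def set_lebesgue_integral_def)
qed


lemma half_moment:
  fixes m :: nat
  shows "set_integrable lborel (einterval 0 \<infinity>) (\<lambda>x. x^m * exp (-(x^6)))"
    "(LBINT x=0..\<infinity>. x^m * exp (-(x^6))) = Gamma ((real m + 1)/6) / 6"
proof -
  define s where "s = (real m + 1)/6"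
  have s: "s > 0" by (simp add: s_def)
  define g where "g = (\<lambda>u::real. u powr (1/6))"
  define g' where "g' = (\<lambda>u::real. (1/6) * u powr (-5/6))"
  define f where "f = (\<lambda>x::real. x^m * exp (-(x^6)))"
  have fg: "f (g u) * g' u = (1/6) * (u powr (s-1) / exp u)" if "u > 0" for u
  proof -
    have "(u powr (1/6)) ^ m = u powr (real m / 6)"
      using that by (simp add: powr_realpow[symmetric] powr_powr)
    moreover have "(u powr (1/6)) ^ 6 = u"
      using that by (simp add: powr_realpow[symmetric] powr_powr)
    moreover have "u powr (real m / 6) * u powr (-5/6) = u powr (s - 1)"
      using that by (simp add: powr_add[symmetric] s_def field_simps)
    ultimately show ?thesis
      by (simp add: f_def g_def g'_def exp_minus field_simps)
  qed
  have ein: "einterval 0 \<infinity> = {0::real<..}"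
    by (auto simp: einterval_def zero_ereal_def)
  have int1: "set_integrable lborel (einterval 0 \<infinity>) (\<lambda>u. f (g u) * g' u)"
  proof -
    have "set_integrable lborel {0<..} (\<lambda>u. (1/6) * (u powr (s-1) / exp u))"
      using gamma_lborel(1)[OF s] by (rule set_integrable_mult_right)
    then show ?thesis unfolding ein
      by (subst set_integrable_cong[where f'="\<lambda>u. (1/6) * (u powr (s-1) / exp u)"]) (auto simp: fg)
  qed
  have I1: "(LBINT u=0..\<infinity>. f (g u) * g' u) = Gamma s / 6"
  proof -
    have "(LBINT u=0..\<infinity>. f (g u) * g' u) = (LBINT u:{0<..}. (1/6) * (u powr (s-1) / exp u))"
      unfolding zero_ereal_def interval_integral_to_infinity_eq
      by (intro set_lebesgue_integral_cong) (auto simp: fg)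
    also have "\<dots> = (1/6) * Gamma s"
      unfolding set_integral_mult_right gamma_lborel(2)[OF s] ..
    finally show ?thesis by simp
  qed
  have A: "((ereal \<circ> g \<circ> real_of_ereal) \<longlongrightarrow> 0) (at_right 0)"
    unfolding zero_ereal_def ereal_tendsto_simps g_def by real_asymp
  have B: "((ereal \<circ> g \<circ> real_of_ereal) \<longlongrightarrow> \<infinity>) (at_left \<infinity>)"
    unfolding ereal_tendsto_simps g_def by real_asymp
  have D1: "(g has_real_derivative g' x) (at x)" if "0 < x" for x
    unfolding g_def g'_def using has_real_derivative_powr[OF that, of "1/6"] by simp
  have D2: "isCont f (g x)" for x unfolding f_def by (intro continuous_intros)
  have D3: "isCont g' x" if "0 < x" for x unfolding g'_def using that by (intro continuous_intros) auto
  have D4: "0 \<le> f (g x)" if "0 < x" for x unfolding f_def g_def using that by simp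
  have D5: "0 \<le> g' x" for x unfolding g'_def by simp
  note sub = interval_integral_substitution_nonneg[of 0 \<infinity> g g' f 0 \<infinity>]
  have C: "set_integrable lborel (einterval 0 \<infinity>) f \<and>
     (LBINT x=0..\<infinity>. f x) = (LBINT u=0..\<infinity>. f (g u) * g' u)"
    apply (intro conjI)
     apply (rule sub(1))
    prefer 10
     apply (rule sub(2))
    using A B int1 D1 D2 D3 D4 D5 by simp_all
  then show "set_integrable lborel (einterval 0 \<infinity>) (\<lambda>x. x^m * exp (-(x^6)))"
    "(LBINT x=0..\<infinity>. x^m * exp (-(x^6))) = Gamma ((real m + 1)/6) / 6"
    using I1 by (simp_all add: f_def s_def)
qed


lemma even_integral:
  fixes h :: "real \<Rightarrow> real"
  assumes meas[measurable]: "h \<in> borel_measurable borel"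
    and ev: "\<And>x. h (-x) = h x"
    and int: "set_integrable lborel {0<..} h"
  shows "integrable lborel h" "integral\<^sup>L lborel h = 2 * (LBINT x:{0<..}. h x)"
proof -
  define f where "f = (\<lambda>x. indicator {0<..} x * h x)"
  have fi: "integrable lborel f" using int by (simp add: f_def set_integrable_def)
  have fi2: "integrable lborel (\<lambda>x. f (0 + (-1) * x))"
    using lborel_integrable_real_affine_iff[of "-1" f 0] fi by simp
  have aff: "integral\<^sup>L lborel f = integral\<^sup>L lborel (\<lambda>x. f (0 + (-1) * x))"
    using lborel_integral_real_affine[of "-1" f 0] by simp
  have ae: "AE x in lborel. h x = f x + f (0 + (-1) * x)"
    using AE_lborel_singleton[of 0]
    by eventually_elim (auto simp: f_def indicator_def ev)
  have "integrable lborel (\<lambda>x. f x + f (0 + (-1) * x))"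
    using fi fi2 by simp
  then show "integrable lborel h"
    using ae by (subst integrable_cong_AE) (auto simp: f_def)
  have "integral\<^sup>L lborel h = integral\<^sup>L lborel (\<lambda>x. f x + f (0 + (-1) * x))"
    using ae by (intro integral_cong_AE) (auto simp: f_def)
  also have "\<dots> = 2 * integral\<^sup>L lborel f"
    using fi fi2 aff by simp
  finally show "integral\<^sup>L lborel h = 2 * (LBINT x:{0<..}. h x)"
    by (simp add: f_def set_lebesgue_integral_def)
qed

lemma full_moment:
  fixes j :: nat
  shows "integrable lborel (\<lambda>x::real. x^(2*j) * exp (-(x^6)))"
    "(LBINT x::real. x^(2*j) * exp (-(x^6))) = Gamma ((2 * real j + 1)/6) / 3"
proof -
  have ein: "einterval 0 \<infinity> = {0::real<..}"
    by (auto simp: einterval_def zero_ereal_def)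
  have si: "set_integrable lborel {0<..} (\<lambda>x::real. x^(2*j) * exp (-(x^6)))"
    using half_moment(1)[of "2*j"] by (simp add: ein)
  have li: "(LBINT x::real:{0<..}. x^(2*j) * exp (-(x^6))) = Gamma ((2 * real j + 1)/6) / 6"
    using half_moment(2)[of "2*j"] unfolding zero_ereal_def interval_integral_to_infinity_eq
    by simp
  have ev: "\<And>x. (-x)^(2*j) * exp (-((-x)^6)) = x^(2*j) * exp (-(x^6::real))"
    by (simp add: power_mult)
  show "integrable lborel (\<lambda>x::real. x^(2*j) * exp (-(x^6)))"
    by (rule even_integral(1)[OF _ ev si]) measurable
  show "(LBINT x::real. x^(2*j) * exp (-(x^6))) = Gamma ((2 * real j + 1)/6) / 3"
    by (subst even_integral(2)[OF _ ev si]) (simp_all add: li)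
qed


lemma poly_bound:
  fixes c y :: real assumes c: "c \<ge> 0" and y: "y \<ge> 0"
  shows "c * y^2 \<le> y^3 / 2 + 4 * c^3"
proof (cases "y \<le> 2 * c")
  case True
  have "c * y^2 \<le> c * (2*c)^2" using True y c by (intro mult_left_mono power_mono) auto
  moreover have "c*(2*c)^2 = 4*c^3" by (simp add: power2_eq_square power3_eq_cube)
  moreover have "0 \<le> y^3/2" using y by simp
  ultimately show ?thesis by linarith
next
  case False
  have "c * y^2 \<le> (y/2) * y^2" using False by (intro mult_right_mono) auto
  moreover have "(y/2) * y^2 = y^3/2" by (simp add: power2_eq_square power3_eq_cube)
  moreover have "0 \<le> 4*c^3" using c by simp
  ultimately show ?thesis by linarith
qed

lemma dom_int:
  fixes c :: real and n :: nat assumes c: "c \<ge> 0"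
  shows "integrable lborel (\<lambda>x::real. x^(2*n) * exp (-(x^6) + c*x^4))"
proof -
  define a :: real where "a = 2 powr (1/6)"
  have a: "a > 0" by (simp add: a_def)
  have a6: "a^6 = 2" unfolding a_def by (simp add: powr_realpow[symmetric] powr_powr)
  define F where "F = (\<lambda>y::real. y^(2*n) * exp (-(y^6)))"
  have Fi: "integrable lborel F" unfolding F_def by (rule full_moment(1))
  have Fi2: "integrable lborel (\<lambda>x. F (0 + (1/a) * x))"
    using lborel_integrable_real_affine[OF Fi, of "1/a" 0] a by simp
  have Fx: "F (0 + (1/a) * x) = x^(2*n) * exp (-(x^6)/2) / a^(2*n)" for x
    using a a6 by (simp add: F_def power_divide field_simps)
  have Gi: "integrable lborel (\<lambda>x. (exp (4*c^3) * a^(2*n)) * F (0 + (1/a) * x))"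
    using Fi2 by (rule integrable_mult_right)
  show ?thesis
  proof (rule Bochner_Integration.integrable_bound[OF Gi])
    show "(\<lambda>x::real. x^(2*n) * exp (-(x^6) + c*x^4)) \<in> borel_measurable lborel" by measurable
    show "AE x in lborel. norm (x^(2*n) * exp (-(x^6) + c*x^4)) \<le>
            norm ((exp (4*c^3) * a^(2*n)) * F (0 + (1/a) * x))"
    proof (intro AE_I2)
      fix x :: real
      have pb: "c * (x^2)^2 \<le> (x^2)^3 / 2 + 4 * c^3" using poly_bound[OF c, of "x^2"] by simp
      have "-(x^6) + c*x^4 \<le> 4*c^3 + (-(x^6)/2)"
        using pb by (simp add: power_mult[symmetric])
      then have "exp (-(x^6) + c*x^4) \<le> exp (4*c^3) * exp (-(x^6)/2)"
        by (simp add: exp_add[symmetric])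
      moreover have nn: "0 \<le> x^(2*n)" by (simp add: power_mult)
      ultimately have le: "x^(2*n) * exp (-(x^6) + c*x^4) \<le> x^(2*n) * (exp (4*c^3) * exp (-(x^6)/2))"
        by (intro mult_left_mono) auto
      have e: "(exp (4*c^3) * a^(2*n)) * F (0 + (1/a) * x) = x^(2*n) * (exp (4*c^3) * exp (-(x^6)/2))"
        unfolding Fx using a by simp
      have "norm (x^(2*n) * exp (-(x^6) + c*x^4)) = x^(2*n) * exp (-(x^6) + c*x^4)"
        using nn by (simp add: abs_mult)
      also have "\<dots> \<le> (exp (4*c^3) * a^(2*n)) * F (0 + (1/a) * x)" unfolding e by (rule le)
      also have "\<dots> \<le> norm ((exp (4*c^3) * a^(2*n)) * F (0 + (1/a) * x))" unfolding real_norm_def by (rule abs_ge_self)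
      finally show "norm (x^(2*n) * exp (-(x^6) + c*x^4)) \<le>
            norm ((exp (4*c^3) * a^(2*n)) * F (0 + (1/a) * x))" .
    qed
  qed
qed


lemma pointwise_sums:
  fixes c x :: real and n :: nat
  shows "(\<lambda>k. c^k / fact k * (x^(2*(n+2*k)) * exp (-(x^6)))) sums (x^(2*n) * exp (-(x^6) + c*x^4))"
proof -
  have "(\<lambda>k. (x^(2*n) * exp (-(x^6))) * ((c*x^4)^k /\<^sub>R fact k)) sums ((x^(2*n) * exp (-(x^6))) * exp (c*x^4))"
    by (intro sums_mult exp_converges)
  moreover have "(x^(2*n) * exp (-(x^6))) * ((c*x^4)^k /\<^sub>R fact k) = c^k / fact k * (x^(2*(n+2*k)) * exp (-(x^6)))" for k
  proof -
    have "x^(2*(n+2*k)) = x^(2*n) * (x^4)^k" by (simp add: power_add power_mult[symmetric] algebra_simps)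
    then show ?thesis by (simp add: power_mult_distrib field_simps)
  qed
  moreover have "(x^(2*n) * exp (-(x^6))) * exp (c*x^4) = x^(2*n) * exp (-(x^6) + c*x^4)"
    by (simp add: exp_add[symmetric])
  ultimately show ?thesis by simp
qed

lemma series_form:
  fixes \<tau> :: real and n :: nat
  defines "a \<equiv> (\<lambda>k. \<tau>^k / fact k * (Gamma ((2 * real (n+2*k) + 1)/6) / 3))"
  shows "summable (\<lambda>k. \<bar>a k\<bar>)" "mu0 n \<tau> = (\<Sum>k. a k)"
proof -
  define f where "f = (\<lambda>k (x::real). \<tau>^k / fact k * (x^(2*(n+2*k)) * exp (-(x^6))))"
  have fi[measurable]: "integrable lborel (f k)" for k
    unfolding f_def by (intro integrable_mult_right full_moment(1))
  have intf: "integral\<^sup>L lborel (f k) = a k" for k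
    unfolding f_def integral_mult_right_zero full_moment(2) a_def ..
  have normf: "norm (f k x) = \<bar>\<tau>\<bar>^k / fact k * (x^(2*(n+2*k)) * exp (-(x^6)))" for k x
    by (simp add: f_def abs_mult power_abs power_even_abs)
  have intnf: "integral\<^sup>L lborel (\<lambda>x. norm (f k x)) = \<bar>a k\<bar>" for k
  proof -
    have g: "0 < Gamma ((2 * real (n+2*k) + 1)/6)" by (rule Gamma_real_pos) simp
    show ?thesis unfolding normf integral_mult_right_zero full_moment(2) a_def
      using g by (simp add: abs_mult power_abs)
  qed
  have nsums: "(\<lambda>k. norm (f k x)) sums (x^(2*n) * exp (-(x^6) + \<bar>\<tau>\<bar>*x^4))" for x
    unfolding normf by (rule pointwise_sums)
  have H: "integrable lborel (\<lambda>x::real. x^(2*n) * exp (-(x^6) + \<bar>\<tau>\<bar>*x^4))"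
    by (rule dom_int) simp
  have "(\<integral>\<^sup>+x. (\<Sum>k. ennreal (norm (f k x))) \<partial>lborel) = (\<Sum>k. \<integral>\<^sup>+x. ennreal (norm (f k x)) \<partial>lborel)"
    by (intro nn_integral_suminf) measurable
  moreover have "(\<integral>\<^sup>+x. (\<Sum>k. ennreal (norm (f k x))) \<partial>lborel) =
      (\<integral>\<^sup>+x. ennreal (x^(2*n) * exp (-(x^6) + \<bar>\<tau>\<bar>*x^4)) \<partial>lborel)"
    by (intro nn_integral_cong suminf_ennreal_eq nsums) simp
  moreover have "(\<integral>\<^sup>+x. ennreal (x^(2*n) * exp (-(x^6) + \<bar>\<tau>\<bar>*x^4)) \<partial>lborel) \<noteq> \<infinity>"
    using integrableD(2)[OF H] .
  moreover have "(\<integral>\<^sup>+x. ennreal (norm (f k x)) \<partial>lborel) = ennreal \<bar>a k\<bar>" for k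
    using intnf[of k] fi[of k, THEN integrable_norm]
    by (subst nn_integral_eq_integral) (auto simp del: real_norm_def)
  ultimately have "(\<Sum>k. ennreal \<bar>a k\<bar>) \<noteq> top" by simp
  then show sa: "summable (\<lambda>k. \<bar>a k\<bar>)"
    by (intro summable_suminf_not_top) auto
  have "mu0 n \<tau> = (LBINT x. (\<Sum>k. f k x))"
    unfolding mu0_def f_def
    by (intro Bochner_Integration.integral_cong refl sums_unique pointwise_sums)
  also have "\<dots> = (\<Sum>k. integral\<^sup>L lborel (f k))"
  proof (rule integral_suminf)
    show "AE x in lborel. summable (\<lambda>k. norm (f k x))"
      using nsums by (auto intro: sums_summable)
    show "summable (\<lambda>k. integral\<^sup>L lborel (\<lambda>x. norm (f k x)))"
      unfolding intnf by (rule sa)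
  qed (rule fi)
  also have "\<dots> = (\<Sum>k. a k)" by (simp add: intf)
  finally show "mu0 n \<tau> = (\<Sum>k. a k)" .
qed


lemma gamma_shift:
  fixes s :: real and j :: nat assumes s: "s > 0"
  shows "Gamma (s + 2 * real j) = Gamma s * 4^j * pochhammer (s/2) j * pochhammer (s/2 + 1/2) j"
proof -
  have nz: "s \<notin> \<int>\<^sub>\<le>\<^sub>0" using s nonpos_Ints_nonpos by fastforce
  have g: "Gamma s > 0" using s by (rule Gamma_real_pos)
  have "pochhammer s (2*j) = Gamma (s + 2 * real j) / Gamma s"
    using pochhammer_Gamma[OF nz, of "2*j"] by simp
  moreover have "pochhammer s (2*j) = 4^j * pochhammer (s/2) j * pochhammer (s/2 + 1/2) j"
    using pochhammer_double[of "s/2" j] by (simp add: power_mult)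
  ultimately show ?thesis using g by (simp add: field_simps)
qed

lemma fact_triple0:
  "(fact (3*j) :: real) = 27^j * fact j * pochhammer (1/3) j * pochhammer (2/3) j"
proof (induction j)
  case (Suc j)
  have e: "3 * Suc j = Suc (Suc (Suc (3*j)))" by simp
  show ?case unfolding e using Suc by (simp add: pochhammer_Suc field_simps)
qed simp

lemma fact_triple1:
  "(fact (3*j+1) :: real) = 27^j * fact j * pochhammer (2/3) j * pochhammer (4/3) j"
proof (induction j)
  case (Suc j)
  have e: "3 * Suc j + 1 = Suc (Suc (Suc (3*j+1)))" by simp
  show ?case unfolding e using Suc by (simp add: pochhammer_Suc field_simps)
qed simp

lemma fact_triple2:
  "(fact (3*j+2) :: real) = 2 * 27^j * fact j * pochhammer (4/3) j * pochhammer (5/3) j"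
proof (induction j)
  case (Suc j)
  have e: "3 * Suc j + 2 = Suc (Suc (Suc (3*j+2)))" by simp
  show ?case unfolding e using Suc by (simp add: pochhammer_Suc field_simps)
qed (simp add: numeral_2_eq_2)


lemma term0:
  fixes \<tau> :: real and n j :: nat
  shows "\<tau>^(3*j) / fact (3*j) * (Gamma ((2 * real (n+2*(3*j)) + 1)/6) / 3) =
    (1/3 * Gamma (real n / 3 + 1/6)) *
    (pochhammer (real n / 6 + 1/12) j * pochhammer (real n / 6 + 7/12) j /
      (pochhammer (1/3) j * pochhammer (2/3) j) * (4 * \<tau> ^ 3 / 27) ^ j / fact j)"
proof -
  have arg: "(2 * real (n+2*(3*j)) + 1)/6 = (real n/3+1/6) + 2*real j" by (simp add: field_simps)
  have gs: "Gamma ((real n/3+1/6) + 2*real j) = Gamma (real n/3+1/6) * 4^j *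
     pochhammer (real n / 6 + 1/12) j * pochhammer (real n / 6 + 7/12) j"
    using gamma_shift[of "real n/3+1/6" j] by (simp add: field_simps)
  have p1: "pochhammer (1/3::real) j > 0" "pochhammer (2/3::real) j > 0"
    by (auto intro: pochhammer_pos)
  have f: "(fact j :: real) > 0" by simp
  show ?thesis unfolding arg gs fact_triple0 power_mult power_divide power_mult_distrib
    using p1 f by (simp add: field_simps)
qed

lemma term1:
  fixes \<tau> :: real and n j :: nat
  shows "\<tau>^(3*j+1) / fact (3*j+1) * (Gamma ((2 * real (n+2*(3*j+1)) + 1)/6) / 3) =
    (1/3 * \<tau> * Gamma (real n / 3 + 5/6)) *
    (pochhammer (real n / 6 + 5/12) j * pochhammer (real n / 6 + 11/12) j /
      (pochhammer (2/3) j * pochhammer (4/3) j) * (4 * \<tau> ^ 3 / 27) ^ j / fact j)"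
proof -
  have arg: "(2 * real (n+2*(3*j+1)) + 1)/6 = (real n/3+5/6) + 2*real j" by (simp add: field_simps)
  have gs: "Gamma ((real n/3+5/6) + 2*real j) = Gamma (real n/3+5/6) * 4^j *
     pochhammer (real n / 6 + 5/12) j * pochhammer (real n / 6 + 11/12) j"
    using gamma_shift[of "real n/3+5/6" j] by (simp add: field_simps)
  have p1: "pochhammer (2/3::real) j > 0" "pochhammer (4/3::real) j > 0"
    by (auto intro: pochhammer_pos)
  have f: "(fact j :: real) > 0" by simp
  show ?thesis unfolding arg gs fact_triple1 power_add power_mult power_divide power_mult_distrib
    using p1 f by (simp add: field_simps)
qed

lemma term2:
  fixes \<tau> :: real and n j :: nat
  shows "\<tau>^(3*j+2) / fact (3*j+2) * (Gamma ((2 * real (n+2*(3*j+2)) + 1)/6) / 3) =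
    (1/6 * \<tau>^2 * Gamma (real n / 3 + 3/2)) *
    (pochhammer (real n / 6 + 3/4) j * pochhammer (real n / 6 + 5/4) j /
      (pochhammer (4/3) j * pochhammer (5/3) j) * (4 * \<tau> ^ 3 / 27) ^ j / fact j)"
proof -
  have arg: "(2 * real (n+2*(3*j+2)) + 1)/6 = (real n/3+3/2) + 2*real j" by (simp add: field_simps)
  have gs: "Gamma ((real n/3+3/2) + 2*real j) = Gamma (real n/3+3/2) * 4^j *
     pochhammer (real n / 6 + 3/4) j * pochhammer (real n / 6 + 5/4) j"
    using gamma_shift[of "real n/3+3/2" j] by (simp add: field_simps)
  have p1: "pochhammer (4/3::real) j > 0" "pochhammer (5/3::real) j > 0"
    by (auto intro: pochhammer_pos)
  have f: "(fact j :: real) > 0" by simp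
  show ?thesis unfolding arg gs fact_triple2 power_add power_mult power_divide power_mult_distrib
    using p1 f by (simp add: field_simps)
qed


lemma suminf_factor:
  fixes b T :: "nat \<Rightarrow> real"
  assumes "\<And>j. b j = C * T j" "summable b"
  shows "(\<Sum>j. b j) = C * (\<Sum>j. T j)"
proof (cases "C = 0")
  case True then show ?thesis using assms by simp
next
  case False
  have "T = (\<lambda>j. b j / C)" using assms(1) False by (auto simp: fun_eq_iff)
  then have "summable T" using assms(2) by (simp add: summable_divide)
  then show ?thesis using assms(1) by (simp add: suminf_mult)
qed

lemma split3:
  fixes a :: "nat \<Rightarrow> real"
  assumes sa: "summable (\<lambda>k. \<bar>a k\<bar>)"
  shows "(\<Sum>k. a k) = (\<Sum>j. a (3*j)) + (\<Sum>j. a (3*j+1)) + (\<Sum>j. a (3*j+2))"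
    "summable (\<lambda>j. a (3*j))" "summable (\<lambda>j. a (3*j+1))" "summable (\<lambda>j. a (3*j+2))"
proof -
  have s3: "{j*3..<j*3+3} = {3*j, 3*j+1, 3*j+2}" for j :: nat by auto
  have g: "(\<lambda>j. sum f {j*3..<j*3+3}) = (\<lambda>j. f (3*j) + f (3*j+1) + f (3*j+2))" for f :: "nat \<Rightarrow> real"
    unfolding s3 by (auto simp: fun_eq_iff)
  have sb: "summable (\<lambda>j. \<bar>a (3*j)\<bar> + \<bar>a (3*j+1)\<bar> + \<bar>a (3*j+2)\<bar>)"
    using sums_group[OF summable_sums[OF sa], of 3] unfolding g by (auto intro: sums_summable)
  show s0: "summable (\<lambda>j. a (3*j))"
    by (rule summable_comparison_test[OF _ sb]) auto
  show s1: "summable (\<lambda>j. a (3*j+1))"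
    by (rule summable_comparison_test[OF _ sb]) auto
  show s2: "summable (\<lambda>j. a (3*j+2))"
    by (rule summable_comparison_test[OF _ sb]) auto
  have "summable a" using sa by (rule summable_rabs_cancel)
  then have "(\<lambda>j. a (3*j) + a (3*j+1) + a (3*j+2)) sums (\<Sum>k. a k)"
    using sums_group[OF summable_sums, of a 3] unfolding g by simp
  moreover have "(\<lambda>j. a (3*j) + a (3*j+1) + a (3*j+2)) sums ((\<Sum>j. a (3*j)) + (\<Sum>j. a (3*j+1)) + (\<Sum>j. a (3*j+2)))"
    by (intro sums_add summable_sums s0 s1 s2)
  ultimately show "(\<Sum>k. a k) = (\<Sum>j. a (3*j)) + (\<Sum>j. a (3*j+1)) + (\<Sum>j. a (3*j+2))"
    by (rule sums_unique2)
qed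

theorem lemma6p10:
  fixes \<tau> :: real and n :: nat
  shows "mu0 n \<tau> =
     1/3 * Gamma (real n / 3 + 1/6) *
       hyp2F2 (real n / 6 + 1/12) (real n / 6 + 7/12) (1/3) (2/3) (4 * \<tau> ^ 3 / 27)
   + 1/3 * \<tau> * Gamma (real n / 3 + 5/6) *
       hyp2F2 (real n / 6 + 5/12) (real n / 6 + 11/12) (2/3) (4/3) (4 * \<tau> ^ 3 / 27)
   + 1/6 * \<tau>^2 * Gamma (real n / 3 + 3/2) *
       hyp2F2 (real n / 6 + 3/4) (real n / 6 + 5/4) (4/3) (5/3) (4 * \<tau> ^ 3 / 27)"
proof -
  define a where "a = (\<lambda>k. \<tau>^k / fact k * (Gamma ((2 * real (n+2*k) + 1)/6) / 3))"
  have sa: "summable (\<lambda>k. \<bar>a k\<bar>)" and mu: "mu0 n \<tau> = (\<Sum>k. a k)"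
    using series_form[where \<tau>=\<tau> and n=n] unfolding a_def by auto
  note sp = split3[OF sa]
  have "(\<Sum>j. a (3*j)) = 1/3 * Gamma (real n / 3 + 1/6) *
       hyp2F2 (real n / 6 + 1/12) (real n / 6 + 7/12) (1/3) (2/3) (4 * \<tau> ^ 3 / 27)"
    unfolding hyp2F2_def by (rule suminf_factor[OF _ sp(2)]) (simp only: a_def term0)
  moreover have "(\<Sum>j. a (3*j+1)) = 1/3 * \<tau> * Gamma (real n / 3 + 5/6) *
       hyp2F2 (real n / 6 + 5/12) (real n / 6 + 11/12) (2/3) (4/3) (4 * \<tau> ^ 3 / 27)"
    unfolding hyp2F2_def by (rule suminf_factor[OF _ sp(3)]) (simp only: a_def term1)
  moreover have "(\<Sum>j. a (3*j+2)) = 1/6 * \<tau>^2 * Gamma (real n / 3 + 3/2) *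
       hyp2F2 (real n / 6 + 3/4) (real n / 6 + 5/4) (4/3) (5/3) (4 * \<tau> ^ 3 / 27)"
    unfolding hyp2F2_def by (rule suminf_factor[OF _ sp(4)]) (simp only: a_def term2)
  ultimately show ?thesis using mu sp(1) by simp
qed

end
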